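(* Let $(d_i)_{i\ge1}$ be an infinite alternate Lyndon word over the alphabet $\mathcal{A}=\{0,1,\dots,d_1\}$, let $M=M((d_i)_{i\ge1})$ be the associated alternate Lyndon system, and let $H_n$ be the number of words of length $n$ in the language $L_M$ of $M$. Then $H_0=1$ and for all $n\ge1$, $$H_n=\sum_{k=1}^{n}(-1)^k(d_{k-1}-d_k)H_{n-k}+1,$$ with the convention $d_0=0$.
   Context: Alphabets are finite sets $\{0,1,\dots,d\}$ of nonnegative integers with the usual order. Alternate order: for two words $x=x_1x_2\cdots$, $y=y_1y_2\cdots$ (both infinite, or both finite of the same length), $x\prec y$ iff there is $k$ with $x_i=y_i$ for all $i<k$ and $(-1)^k(x_k-y_k)<0$; $x\preceq y$ iff $x=y$ or $x\prec y$. Finite words of different lengths are compared after padding the shorter one on the right with zeros. An alternate Lyndon word is an infinite word $(d_i)_{i\ge1}$ such that $d_1d_2d_3\cdots\preceq d_nd_{n+1}\cdots$ for all $n\ge1$. The alternate Lyndon system $M((d_i)_{i\ge1})$ is the set of infinite words $x_1x_2\cdots$ over the alphabet with $d_1d_2\cdots\preceq x_kx_{k+1}\cdots$ for all $k\ge1$. Its language $L_M$ is the set of finite factors (finite blocks of consecutive letters) of elements of $M$; $H_n$ denotes the number of words of length $n$ in $L_M$, with $H_0=1$. *)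

theory Defs
  imports Main
begin

(* Infinite words are functions nat => nat, indexed from 1 (the value at 0 is ignored). *)

definition alt_less :: "(nat \<Rightarrow> nat) \<Rightarrow> (nat \<Rightarrow> nat) \<Rightarrow> bool" where
  "alt_less x y \<longleftrightarrow> (\<exists>k\<ge>1. (\<forall>i. 1 \<le> i \<and> i < k \<longrightarrow> x i = y i) \<and>
      (-1::int) ^ k * (int (x k) - int (y k)) < 0)"

definition alt_le :: "(nat \<Rightarrow> nat) \<Rightarrow> (nat \<Rightarrow> nat) \<Rightarrow> bool" where
  "alt_le x y \<longleftrightarrow> (\<forall>i\<ge>1. x i = y i) \<or> alt_less x y"

definition suffix_from :: "(nat \<Rightarrow> nat) \<Rightarrow> nat \<Rightarrow> nat \<Rightarrow> nat" where
  "suffix_from x n = (\<lambda>i. x (n + i - 1))"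

definition alt_lyndon :: "(nat \<Rightarrow> nat) \<Rightarrow> bool" where
  "alt_lyndon d \<longleftrightarrow> (\<forall>n\<ge>1. alt_le d (suffix_from d n))"

definition alt_lyndon_system :: "nat \<Rightarrow> (nat \<Rightarrow> nat) \<Rightarrow> (nat \<Rightarrow> nat) set" where
  "alt_lyndon_system a d = {x. (\<forall>i\<ge>1. x i \<le> a) \<and> (\<forall>k\<ge>1. alt_le d (suffix_from x k))}"

definition language :: "(nat \<Rightarrow> nat) set \<Rightarrow> nat list set" where
  "language M = {w. \<exists>x\<in>M. \<exists>k\<ge>1. w = map x [k..<k + length w]}"

definition H :: "(nat \<Rightarrow> nat) set \<Rightarrow> nat \<Rightarrow> nat" where
  "H M n = card {w \<in> language M. length w = n}"

end

theory Submission imports Defs begin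

function lle :: "nat list \<Rightarrow> nat list \<Rightarrow> bool" where
  "lle [] [] = True"
| "lle (a#x) (b#y) = ((b < a \<and> length x = length y) \<or> (a = b \<and> lle y x))"
| "lle [] (b#y) = False"
| "lle (a#x) [] = False"
  by pat_completeness auto
termination by (relation "measure (\<lambda>(x,y). length x + length y)") auto

lemma lle_len: "lle x y \<Longrightarrow> length x = length y"
  by (induction x y rule: lle.induct) auto

lemma lle_refl: "lle x x"
  by (induction x) auto

lemma lle_antisym: "lle x y \<Longrightarrow> lle y x \<Longrightarrow> x = y"
proof (induction x arbitrary: y)
  case Nil then show ?case by (cases y) auto
next
  case (Cons a x) then show ?case by (cases y) auto
qed

lemma lle_total: "length x = length y \<Longrightarrow> lle x y \<or> lle y x"
proof (induction x arbitrary: y)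
  case Nil then show ?case by (cases y) auto
next
  case (Cons a x) then show ?case by (cases y) auto
qed

lemma lle_trans_aux: "\<forall>y z. (lle x y \<and> lle y z \<longrightarrow> lle x z) \<and> (lle z y \<and> lle y x \<longrightarrow> lle z x)"
proof (induction x)
  case Nil
  show ?case
  proof (intro allI conjI impI)
    fix y z :: "nat list"
    assume "lle [] y \<and> lle y z" then show "lle [] z" by (cases y; cases z) auto
  next
    fix y z :: "nat list"
    assume "lle z y \<and> lle y []" then show "lle z []" by (cases y; cases z) auto
  qed
next
  case (Cons a x)
  show ?case
  proof (intro allI conjI impI)
    fix y z assume h: "lle (a # x) y \<and> lle y z"
    then obtain b y' where y: "y = b # y'" by (cases y) auto
    with h obtain c z' where z: "z = c # z'" by (cases z) auto
    have l1: "length x = length y'" "length y' = length z'"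
      using lle_len[of "a # x" y] lle_len[of y z] h unfolding y z by auto
    have ih: "(lle x y' \<and> lle y' z' \<longrightarrow> lle x z') \<and> (lle z' y' \<and> lle y' x \<longrightarrow> lle z' x)"
      using Cons.IH by blast
    have h1: "(b < a \<and> length x = length y') \<or> (a = b \<and> lle y' x)" using h y by simp
    have h2: "(c < b \<and> length y' = length z') \<or> (b = c \<and> lle z' y')" using h y z by simp
    have "(c < a \<and> length x = length z') \<or> (a = c \<and> lle z' x)"
      using h1 h2 ih l1 by auto
    then show "lle (a # x) z" unfolding z by simp
  next
    fix y z assume h: "lle z y \<and> lle y (a # x)"
    then obtain b y' where y: "y = b # y'" by (cases y) auto
    with h obtain c z' where z: "z = c # z'" by (cases z) auto
    have l1: "length x = length y'" "length y' = length z'"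
      using lle_len[of y "a # x"] lle_len[of z y] h unfolding y z by auto
    have ih: "(lle x y' \<and> lle y' z' \<longrightarrow> lle x z') \<and> (lle z' y' \<and> lle y' x \<longrightarrow> lle z' x)"
      using Cons.IH by blast
    have h1: "(a < b \<and> length y' = length x) \<or> (b = a \<and> lle x y')" using h y by simp
    have h2: "(b < c \<and> length z' = length y') \<or> (c = b \<and> lle y' z')" using h y z by simp
    have "(a < c \<and> length z' = length x) \<or> (c = a \<and> lle x z')"
      using h1 h2 ih l1 by auto
    then show "lle z (a # x)" unfolding z by simp
  qed
qed

lemma lle_trans: "lle x y \<Longrightarrow> lle y z \<Longrightarrow> lle x z"
  using lle_trans_aux by blast

definition pre :: "(nat \<Rightarrow> nat) \<Rightarrow> nat \<Rightarrow> nat list" where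
  "pre x m = map (\<lambda>i. x (Suc i)) [0..<m]"

lemma pre_0[simp]: "pre x 0 = []" by (simp add: pre_def)
lemma pre_Suc: "pre x (Suc m) = x 1 # pre (\<lambda>i. x (Suc i)) m"
  unfolding pre_def map_upt_Suc by simp
lemma length_pre[simp]: "length (pre x m) = m" by (simp add: pre_def)
lemma nth_pre[simp]: "i < m \<Longrightarrow> pre x m ! i = x (Suc i)" by (simp add: pre_def)

definition lt_at :: "(nat \<Rightarrow> nat) \<Rightarrow> (nat \<Rightarrow> nat) \<Rightarrow> nat \<Rightarrow> bool" where
  "lt_at x y k \<longleftrightarrow> (\<forall>i. 1 \<le> i \<and> i < k \<longrightarrow> x i = y i) \<and> (-1::int) ^ k * (int (x k) - int (y k)) < 0"

lemma lt1: "lt_at x y 1 \<longleftrightarrow> y 1 < x 1"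
  by (auto simp: lt_at_def)

lemma ltSuc: "1 \<le> k \<Longrightarrow> lt_at x y (Suc k) \<longleftrightarrow> x 1 = y 1 \<and> lt_at (\<lambda>i. y (Suc i)) (\<lambda>i. x (Suc i)) k"
proof -
  assume k: "1 \<le> k"
  have a: "(\<forall>i. 1 \<le> i \<and> i < Suc k \<longrightarrow> x i = y i) \<longleftrightarrow> x 1 = y 1 \<and> (\<forall>i. 1 \<le> i \<and> i < k \<longrightarrow> y (Suc i) = x (Suc i))"
  proof
    assume h: "\<forall>i. 1 \<le> i \<and> i < Suc k \<longrightarrow> x i = y i"
    then show "x 1 = y 1 \<and> (\<forall>i. 1 \<le> i \<and> i < k \<longrightarrow> y (Suc i) = x (Suc i))" using k by auto
  next
    assume h: "x 1 = y 1 \<and> (\<forall>i. 1 \<le> i \<and> i < k \<longrightarrow> y (Suc i) = x (Suc i))"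
    show "\<forall>i. 1 \<le> i \<and> i < Suc k \<longrightarrow> x i = y i"
    proof (intro allI impI)
      fix i assume i: "1 \<le> i \<and> i < Suc k"
      show "x i = y i"
      proof (cases "i = 1")
        case True then show ?thesis using h by simp
      next
        case False
        then obtain i' where "i = Suc i'" "1 \<le> i'" "i' < k" using i by (cases i) auto
        then show ?thesis using h by auto
      qed
    qed
  qed
  have b: "(-1::int) ^ Suc k * (int (x (Suc k)) - int (y (Suc k))) = (-1::int) ^ k * (int (y (Suc k)) - int (x (Suc k)))"
    by (simp add: algebra_simps)
  show ?thesis unfolding lt_at_def using a b by auto
qed

lemma pre_char:
  "lle (pre x m) (pre y m) \<longleftrightarrow> (\<forall>i. 1 \<le> i \<and> i \<le> m \<longrightarrow> x i = y i) \<or> (\<exists>k. 1 \<le> k \<and> k \<le> m \<and> lt_at x y k)"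
proof (induction m arbitrary: x y)
  case 0
  then show ?case by simp
next
  case (Suc m)
  have e1: "(\<forall>i. 1 \<le> i \<and> i \<le> Suc m \<longrightarrow> x i = y i) \<longleftrightarrow> x 1 = y 1 \<and> (\<forall>i. 1 \<le> i \<and> i \<le> m \<longrightarrow> y (Suc i) = x (Suc i))"
  proof
    assume h: "\<forall>i. 1 \<le> i \<and> i \<le> Suc m \<longrightarrow> x i = y i"
    then show "x 1 = y 1 \<and> (\<forall>i. 1 \<le> i \<and> i \<le> m \<longrightarrow> y (Suc i) = x (Suc i))" by auto
  next
    assume h: "x 1 = y 1 \<and> (\<forall>i. 1 \<le> i \<and> i \<le> m \<longrightarrow> y (Suc i) = x (Suc i))"
    show "\<forall>i. 1 \<le> i \<and> i \<le> Suc m \<longrightarrow> x i = y i"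
    proof (intro allI impI)
      fix i assume i: "1 \<le> i \<and> i \<le> Suc m"
      show "x i = y i"
      proof (cases "i = 1")
        case True then show ?thesis using h by simp
      next
        case False
        then obtain i' where "i = Suc i'" "1 \<le> i'" "i' \<le> m" using i by (cases i) auto
        then show ?thesis using h by auto
      qed
    qed
  qed
  have e2: "(\<exists>k. 1 \<le> k \<and> k \<le> Suc m \<and> lt_at x y k) \<longleftrightarrow> lt_at x y 1 \<or> (\<exists>k. 1 \<le> k \<and> k \<le> m \<and> lt_at x y (Suc k))"
  proof
    assume "\<exists>k. 1 \<le> k \<and> k \<le> Suc m \<and> lt_at x y k"
    then obtain k where k: "1 \<le> k" "k \<le> Suc m" "lt_at x y k" by blast
    show "lt_at x y 1 \<or> (\<exists>k. 1 \<le> k \<and> k \<le> m \<and> lt_at x y (Suc k))"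
    proof (cases "k = 1")
      case True then show ?thesis using k by simp
    next
      case False
      then obtain k' where "k = Suc k'" "1 \<le> k'" "k' \<le> m" using k by (cases k) auto
      then show ?thesis using k by auto
    qed
  next
    assume "lt_at x y 1 \<or> (\<exists>k. 1 \<le> k \<and> k \<le> m \<and> lt_at x y (Suc k))"
    then show "\<exists>k. 1 \<le> k \<and> k \<le> Suc m \<and> lt_at x y k"
    proof
      assume "lt_at x y 1" then show ?thesis by (intro exI[of _ 1]) simp
    next
      assume "\<exists>k. 1 \<le> k \<and> k \<le> m \<and> lt_at x y (Suc k)"
      then obtain k where "1 \<le> k" "k \<le> m" "lt_at x y (Suc k)" by blast
      then show ?thesis by (intro exI[of _ "Suc k"]) simp
    qed
  qed
  have e3: "(\<exists>k. 1 \<le> k \<and> k \<le> m \<and> lt_at x y (Suc k)) \<longleftrightarrow> x 1 = y 1 \<and> (\<exists>k. 1 \<le> k \<and> k \<le> m \<and> lt_at (\<lambda>i. y (Suc i)) (\<lambda>i. x (Suc i)) k)"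
    by (auto simp: ltSuc)
  have "lle (pre x (Suc m)) (pre y (Suc m)) \<longleftrightarrow> y 1 < x 1 \<or> (x 1 = y 1 \<and> lle (pre (\<lambda>i. y (Suc i)) m) (pre (\<lambda>i. x (Suc i)) m))"
    by (simp add: pre_Suc)
  also have "\<dots> \<longleftrightarrow> y 1 < x 1 \<or> (x 1 = y 1 \<and> ((\<forall>i. 1 \<le> i \<and> i \<le> m \<longrightarrow> y (Suc i) = x (Suc i)) \<or> (\<exists>k. 1 \<le> k \<and> k \<le> m \<and> lt_at (\<lambda>i. y (Suc i)) (\<lambda>i. x (Suc i)) k)))"
    using Suc.IH by simp
  also have "\<dots> \<longleftrightarrow> (\<forall>i. 1 \<le> i \<and> i \<le> Suc m \<longrightarrow> x i = y i) \<or> (\<exists>k. 1 \<le> k \<and> k \<le> Suc m \<and> lt_at x y k)"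
    unfolding e1 e2 e3 lt1 by blast
  finally show ?case .
qed

lemma pre_eq: "pre x m = pre y m \<longleftrightarrow> (\<forall>i. 1 \<le> i \<and> i \<le> m \<longrightarrow> x i = y i)"
proof
  assume h: "pre x m = pre y m"
  show "\<forall>i. 1 \<le> i \<and> i \<le> m \<longrightarrow> x i = y i"
  proof (intro allI impI)
    fix i assume i: "1 \<le> i \<and> i \<le> m"
    then obtain i' where i': "i = Suc i'" "i' < m" by (cases i) auto
    have "pre x m ! i' = pre y m ! i'" using h by simp
    then show "x i = y i" using i' by simp
  qed
next
  assume h: "\<forall>i. 1 \<le> i \<and> i \<le> m \<longrightarrow> x i = y i"
  show "pre x m = pre y m"
    by (rule nth_equalityI) (use h in auto)
qed

lemma alt_le_pre: "alt_le x y \<Longrightarrow> lle (pre x m) (pre y m)"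
proof -
  assume h: "alt_le x y"
  show ?thesis
  proof (cases "\<forall>i\<ge>1. x i = y i")
    case True then show ?thesis unfolding pre_char by auto
  next
    case False
    then have "alt_less x y" using h unfolding alt_le_def by auto
    then obtain k where k: "k \<ge> 1" "lt_at x y k" unfolding alt_less_def lt_at_def by auto
    show ?thesis
    proof (cases "k \<le> m")
      case True then show ?thesis using k unfolding pre_char by auto
    next
      case False
      then have "\<forall>i. 1 \<le> i \<and> i \<le> m \<longrightarrow> x i = y i" using k unfolding lt_at_def by auto
      then show ?thesis unfolding pre_char by auto
    qed
  qed
qed

lemma pre_strict: "lle (pre x m) (pre y m) \<Longrightarrow> pre x m \<noteq> pre y m \<Longrightarrow> alt_less x y"
  unfolding pre_char pre_eq alt_less_def lt_at_def by auto



definition adm :: "(nat \<Rightarrow> nat) \<Rightarrow> nat list \<Rightarrow> bool" where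
  "adm d w \<longleftrightarrow> (\<forall>j<length w. lle (pre d (length w - j)) (drop j w))"

lemma pre_suffix: "pre (suffix_from x p) m = map x [p..<p+m]"
  by (rule nth_equalityI) (auto simp: suffix_from_def)

lemma lang_adm:
  assumes "w \<in> language (alt_lyndon_system a d)"
  shows "adm d w"
proof -
  from assms obtain x k where x: "x \<in> alt_lyndon_system a d" and k: "k \<ge> 1"
    and w: "w = map x [k..<k + length w]"
    unfolding language_def by blast
  show ?thesis unfolding adm_def
  proof (intro allI impI)
    fix j assume j: "j < length w"
    have "drop j w = map x [k+j..<k + length w]" using w by (metis drop_map drop_upt)
    also have "\<dots> = pre (suffix_from x (k+j)) (length w - j)"
      using j by (simp add: pre_suffix)
    finally have dw: "drop j w = pre (suffix_from x (k+j)) (length w - j)" .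
    have "alt_le d (suffix_from x (k+j))" using x k unfolding alt_lyndon_system_def by auto
    then show "lle (pre d (length w - j)) (drop j w)" unfolding dw by (rule alt_le_pre)
  qed
qed

lemma adm_letter:
  assumes "adm d w" "i < length w"
  shows "w ! i \<le> d 1"
proof -
  have "lle (pre d (length w - i)) (drop i w)" using assms unfolding adm_def by auto
  moreover have "length w - i = Suc (length w - Suc i)" using assms by simp
  moreover have "drop i w = w ! i # drop (Suc i) w" using assms by (simp add: Cons_nth_drop_Suc)
  ultimately show ?thesis by (auto simp: pre_Suc)
qed

lemma adm_letters: "adm d w \<Longrightarrow> set w \<subseteq> {..d 1}"
  using adm_letter by (fastforce simp: in_set_conv_nth)

lemma alt_le_cong:
  assumes "alt_le d y" "\<forall>i\<ge>1. y i = y' i"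
  shows "alt_le d y'"
proof -
  have eq: "\<And>i. i \<ge> 1 \<Longrightarrow> y i = y' i" using assms(2) by auto
  show ?thesis
  proof (cases "\<forall>i\<ge>1. d i = y i")
    case True then show ?thesis using eq unfolding alt_le_def by auto
  next
    case False
    then have "alt_less d y" using assms(1) unfolding alt_le_def by auto
    then obtain k where k: "k \<ge> 1" "\<forall>i. 1 \<le> i \<and> i < k \<longrightarrow> d i = y i"
      "(-1::int) ^ k * (int (d k) - int (y k)) < 0" unfolding alt_less_def by auto
    have "alt_less d y'" unfolding alt_less_def
      using k eq[of k] eq by (intro exI[of _ k]) auto
    then show ?thesis unfolding alt_le_def by auto
  qed
qed

lemma adm_lang:
  assumes alph: "\<forall>i\<ge>1. d i \<le> d 1" and lyn: "alt_lyndon d" and adm: "adm d w"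
  shows "w \<in> language (alt_lyndon_system (d 1) d)"
proof -
  define n where "n = length w"
  define P where "P j \<longleftrightarrow> j \<le> n \<and> drop j w = pre d (n - j)" for j
  have Pn: "P n" unfolding P_def n_def by simp
  define j0 where "j0 = (LEAST j. P j)"
  have Pj0: "P j0" unfolding j0_def by (rule LeastI, rule Pn)
  have notP: "\<And>q. q < j0 \<Longrightarrow> \<not> P q" unfolding j0_def using not_less_Least by blast
  have j0n: "j0 \<le> n" using Pj0 unfolding P_def by simp
  define x where "x i = (if i \<le> j0 then w ! (i - 1) else d (i - j0))" for i
  have xw: "map x [1..<1+n] = w"
  proof (rule nth_equalityI)
    show "length (map x [1..<1 + n]) = length w" by (simp add: n_def[symmetric])
  next
    fix i assume "i < length (map x [1..<1 + n])"
    then have i: "i < n" by (simp del: upt_Suc)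
    show "map x [1..<1 + n] ! i = w ! i"
    proof (cases "Suc i \<le> j0")
      case True then show ?thesis using i by (simp add: x_def del: upt_Suc)
    next
      case False
      have "drop j0 w ! (i - j0) = pre d (n - j0) ! (i - j0)" using Pj0 unfolding P_def by simp
      then have "w ! i = d (Suc (i - j0))" using False i j0n by (simp add: n_def)
      then show ?thesis using False i by (simp add: x_def Suc_diff_le del: upt_Suc)
    qed
  qed
  have xM: "x \<in> alt_lyndon_system (d 1) d"
    unfolding alt_lyndon_system_def
  proof (intro CollectI conjI allI impI)
    fix i :: nat assume i: "i \<ge> 1"
    show "x i \<le> d 1"
    proof (cases "i \<le> j0")
      case True
      then have "i - 1 < length w" using i j0n n_def by simp
      then show ?thesis using True adm_letter[OF adm] by (simp add: x_def)
    next
      case False then show ?thesis using alph by (simp add: x_def)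
    qed
  next
    fix p :: nat assume p: "p \<ge> 1"
    show "alt_le d (suffix_from x p)"
    proof (cases "p \<le> j0")
      case False
      have "alt_le d (suffix_from d (p - j0))" using lyn False unfolding alt_lyndon_def by auto
      moreover have "\<forall>i\<ge>1. suffix_from d (p - j0) i = suffix_from x p i"
        using False by (auto simp: suffix_from_def x_def)
      ultimately show ?thesis by (rule alt_le_cong)
    next
      case True
      define q where "q = p - 1"
      have q: "q < j0" "q < n" using True p j0n unfolding q_def by auto
      have ne: "drop q w \<noteq> pre d (n - q)" using notP[OF q(1)] q unfolding P_def by auto
      have le: "lle (pre d (n - q)) (drop q w)" using adm q unfolding adm_def n_def by auto
      have "drop q w = map x [1+q..<1+n]" using xw by (metis drop_map drop_upt)
      also have "\<dots> = pre (suffix_from x p) (n - q)" using q p by (simp add: pre_suffix q_def)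
      finally have "drop q w = pre (suffix_from x p) (n - q)" .
      then have "alt_less d (suffix_from x p)" using ne le pre_strict by metis
      then show ?thesis unfolding alt_le_def by simp
    qed
  qed
  show ?thesis unfolding language_def using xM xw n_def by force
qed


definition A :: "(nat \<Rightarrow> nat) \<Rightarrow> nat \<Rightarrow> nat list set" where
  "A d m = {w. adm d w \<and> length w = m}"

definition HH :: "(nat \<Rightarrow> nat) \<Rightarrow> nat \<Rightarrow> nat" where
  "HH d m = card (A d m)"

definition sh :: "(nat \<Rightarrow> nat) \<Rightarrow> nat \<Rightarrow> nat \<Rightarrow> nat" where
  "sh d j = (\<lambda>i. d (i + j))"

definition Q :: "(nat \<Rightarrow> nat) \<Rightarrow> nat \<Rightarrow> nat \<Rightarrow> nat" where
  "Q d j m = card {v \<in> A d m. lle v (pre (sh d j) m)}"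

lemma finite_A: "finite (A d m)"
proof (rule finite_subset)
  show "A d m \<subseteq> {xs. set xs \<subseteq> {..d 1} \<and> length xs = m}"
    using adm_letters by (auto simp: A_def)
  show "finite {xs. set xs \<subseteq> {..d 1} \<and> length xs = m}"
    by (rule finite_lists_length_eq) simp
qed

lemma A0: "A d 0 = {[]}"
  by (auto simp: A_def adm_def)

lemma A_Cons: "b # v \<in> A d (Suc m) \<longleftrightarrow> v \<in> A d m \<and> lle (pre d (Suc m)) (b # v)"
  by (auto simp: A_def adm_def All_less_Suc2)

lemma adm_head: "adm d v \<Longrightarrow> lle (pre d (length v)) v"
  by (cases v) (auto simp: adm_def lle_refl[of "[]", simplified] simp del: lle.simps(2))

lemma sh0[simp]: "sh d 0 = d" by (simp add: sh_def)

lemma pre_sh_Suc: "pre (sh d j) (Suc m) = d (Suc j) # pre (sh d (Suc j)) m"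
proof -
  have "(\<lambda>i. sh d j (Suc i)) = sh d (Suc j)" by (simp add: sh_def)
  then show ?thesis by (simp add: pre_Suc sh_def)
qed

lemma pre_sh_map: "pre (sh d j) m = map d [Suc j..<Suc j + m]"
  by (rule nth_equalityI) (auto simp: sh_def nth_upt add.commute simp del: upt_Suc)

lemma d_in_M:
  assumes alph: "\<forall>i\<ge>1. d i \<le> d 1" and lyn: "alt_lyndon d"
  shows "d \<in> alt_lyndon_system (d 1) d"
  using assms unfolding alt_lyndon_system_def alt_lyndon_def by auto

lemma pre_sh_A:
  assumes alph: "\<forall>i\<ge>1. d i \<le> d 1" and lyn: "alt_lyndon d"
  shows "pre (sh d j) m \<in> A d m"
proof -
  have "pre (sh d j) m \<in> language (alt_lyndon_system (d 1) d)"
    unfolding language_def pre_sh_map using d_in_M[OF alph lyn] by force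
  then show ?thesis using lang_adm unfolding A_def by auto
qed

lemma card_cons:
  fixes S :: "nat list set"
  assumes fin: "finite S" and hd: "\<forall>w\<in>S. w \<noteq> [] \<and> hd w \<le> N"
  shows "card S = (\<Sum>b\<le>N. card {v. b # v \<in> S})"
proof -
  have S: "S = (\<Union>b\<in>{..N}. (Cons b) ` {v. b # v \<in> S})"
  proof
    show "S \<subseteq> (\<Union>b\<in>{..N}. (Cons b) ` {v. b # v \<in> S})"
    proof
      fix w assume w: "w \<in> S"
      then obtain b v where "w = b # v" using hd by (cases w) auto
      then show "w \<in> (\<Union>b\<in>{..N}. (Cons b) ` {v. b # v \<in> S})" using w hd by force
    qed
  qed auto
  have fin': "\<And>b. finite {v. b # v \<in> S}"
    using finite_vimageI[OF fin, of "Cons b" for b] by (simp add: vimage_def inj_on_def)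
  have "card S = (\<Sum>b\<le>N. card ((Cons b) ` {v. b # v \<in> S}))"
    by (subst S, rule card_UN_disjoint) (auto simp: fin')
  also have "\<dots> = (\<Sum>b\<le>N. card {v. b # v \<in> S})"
    by (rule sum.cong) (auto intro: card_image simp: inj_on_def)
  finally show ?thesis .
qed

lemma A_hd: "\<forall>w\<in>A d (Suc m). w \<noteq> [] \<and> hd w \<le> d 1"
proof
  fix w assume "w \<in> A d (Suc m)"
  then have "adm d w" "length w = Suc m" by (auto simp: A_def)
  then show "w \<noteq> [] \<and> hd w \<le> d 1" using adm_letter[of d w 0] by (cases w) auto
qed

lemma HR: "HH d (Suc m) = d 1 * HH d m + Q d 1 m"
proof -
  have "HH d (Suc m) = (\<Sum>b\<le>d 1. card {v. b # v \<in> A d (Suc m)})"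
    unfolding HH_def by (rule card_cons[OF finite_A A_hd])
  also have "\<dots> = (\<Sum>b<d 1. card {v. b # v \<in> A d (Suc m)}) + card {v. d 1 # v \<in> A d (Suc m)}"
    by (simp add: lessThan_Suc_atMost[symmetric])
  also have "(\<Sum>b<d 1. card {v. b # v \<in> A d (Suc m)}) = (\<Sum>b<d 1. HH d m)"
  proof (rule sum.cong)
    fix b assume "b \<in> {..<d 1}"
    then have "{v. b # v \<in> A d (Suc m)} = A d m"
      by (auto simp: A_Cons pre_Suc) (auto simp: A_def)
    then show "card {v. b # v \<in> A d (Suc m)} = HH d m" by (simp add: HH_def)
  qed simp
  also have "{v. d 1 # v \<in> A d (Suc m)} = {v \<in> A d m. lle v (pre (sh d 1) m)}"
    using pre_sh_Suc[of d 0 m] by (auto simp: A_Cons)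
  finally show ?thesis by (simp add: Q_def)
qed

lemma Q0:
  assumes alph: "\<forall>i\<ge>1. d i \<le> d 1" and lyn: "alt_lyndon d"
  shows "Q d 0 m = 1"
proof -
  have "{v \<in> A d m. lle v (pre (sh d 0) m)} = {pre d m}"
    using pre_sh_A[OF alph lyn, of 0 m] adm_head lle_antisym lle_refl by (auto simp: A_def)
  then show ?thesis by (simp add: Q_def)
qed

lemma Qbase: "Q d j 0 = 1"
proof -
  have "{v \<in> A d 0. lle v (pre (sh d j) 0)} = {[]}" by (auto simp: A0)
  then show ?thesis by (simp add: Q_def)
qed


lemma lle_Cons_len: "length v = length u \<Longrightarrow> lle (a # u) (b # v) \<longleftrightarrow> b < a \<or> (a = b \<and> lle v u)"
  by simp

lemma QR:
  assumes alph: "\<forall>i\<ge>1. d i \<le> d 1" and lyn: "alt_lyndon d"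
  shows "int (Q d j (Suc m)) + int (Q d (Suc j) m) = int (HH d (Suc m)) - int (d (Suc j)) * int (HH d m) + 1"
proof -
  define e where "e = d (Suc j)"
  define u where "u = pre (sh d (Suc j)) m"
  define u1 where "u1 = pre (sh d 1) m"
  have e: "e \<le> d 1" using alph e_def by auto
  have uA: "u \<in> A d m" unfolding u_def by (rule pre_sh_A[OF alph lyn])
  have u1A: "u1 \<in> A d m" unfolding u1_def by (rule pre_sh_A[OF alph lyn])
  have lenA: "\<And>v. v \<in> A d m \<Longrightarrow> length v = m" by (simp add: A_def)
  have lu: "length u = m" "length u1 = m" by (simp_all add: u_def u1_def)
  define S where "S = {w \<in> A d (Suc m). lle w (pre (sh d j) (Suc m))}"
  have fS: "finite S" unfolding S_def using finite_A by simp
  have hS: "\<forall>w\<in>S. w \<noteq> [] \<and> hd w \<le> d 1" using A_hd unfolding S_def by blast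
  have QS: "Q d j (Suc m) = (\<Sum>b\<le>d 1. card {v. b # v \<in> S})"
    unfolding Q_def S_def[symmetric] by (rule card_cons[OF fS hS])
  have fb: "{v. b # v \<in> S} = {v \<in> A d m. (b < d 1 \<or> (d 1 = b \<and> lle v u1)) \<and> (e < b \<or> (b = e \<and> lle u v))}" for b
  proof -
    have p0: "pre d (Suc m) = d 1 # u1" using pre_sh_Suc[of d 0 m] by (simp add: u1_def)
    have pj: "pre (sh d j) (Suc m) = e # u" by (simp add: pre_sh_Suc e_def u_def)
    have "{v. b # v \<in> S} = {v \<in> A d m. lle (d 1 # u1) (b # v) \<and> lle (b # v) (e # u)}"
      unfolding S_def by (auto simp: A_Cons p0 pj)
    also have "\<dots> = {v \<in> A d m. (b < d 1 \<or> (d 1 = b \<and> lle v u1)) \<and> (e < b \<or> (b = e \<and> lle u v))}"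
      by (auto simp: lenA lu)
    finally show ?thesis .
  qed
  define C1 where "C1 = {v \<in> A d m. lle u v}"
  define Qs where "Qs = {v \<in> A d m. lle v u}"
  have QsQ: "Q d (Suc j) m = card Qs" by (simp add: Q_def Qs_def u_def)
  have Q1: "Q d 1 m = card {v \<in> A d m. lle v u1}" by (simp add: Q_def u1_def)
  have c1: "card C1 + card Qs = HH d m + 1"
  proof -
    have "C1 \<union> Qs = A d m"
    proof
      show "C1 \<union> Qs \<subseteq> A d m" by (auto simp: C1_def Qs_def)
      show "A d m \<subseteq> C1 \<union> Qs"
      proof
        fix v assume v: "v \<in> A d m"
        then have "lle u v \<or> lle v u" using lle_total[of u v] lenA lu by simp
        then show "v \<in> C1 \<union> Qs" using v by (auto simp: C1_def Qs_def)
      qed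
    qed
    moreover have "C1 \<inter> Qs = {u}" by (auto simp: C1_def Qs_def uA lle_refl intro: lle_antisym)
    ultimately show ?thesis using card_Un_Int[of C1 Qs] finite_A[of d m]
      unfolding HH_def C1_def Qs_def by simp
  qed
  have HR': "int (Q d 1 m) = int (HH d (Suc m)) - int (d 1) * int (HH d m)"
    using HR[of d m] by simp
  show ?thesis
  proof (cases "e = d 1")
    case True
    have uu1: "lle u u1"
    proof -
      have "alt_le d (suffix_from d (Suc j))" using lyn unfolding alt_lyndon_def by auto
      then have "lle (pre d (Suc m)) (pre (suffix_from d (Suc j)) (Suc m))" by (rule alt_le_pre)
      moreover have "pre (suffix_from d (Suc j)) (Suc m) = pre (sh d j) (Suc m)"
        unfolding pre_def by (simp add: suffix_from_def sh_def add.commute)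
      ultimately have "lle (d 1 # u1) (e # u)"
        using pre_sh_Suc[of d 0 m] pre_sh_Suc[of d j m] by (simp add: u1_def u_def e_def)
      then show ?thesis using True by simp
    qed
    define C2 where "C2 = {v \<in> A d m. lle v u1 \<and> lle u v}"
    have c2: "card C2 + card Qs = Q d 1 m + 1"
    proof -
      have "C2 \<union> Qs = {v \<in> A d m. lle v u1}"
      proof
        show "C2 \<union> Qs \<subseteq> {v \<in> A d m. lle v u1}"
          using uu1 by (auto simp: C2_def Qs_def intro: lle_trans)
        show "{v \<in> A d m. lle v u1} \<subseteq> C2 \<union> Qs"
        proof
          fix v assume v: "v \<in> {v \<in> A d m. lle v u1}"
          then have "lle u v \<or> lle v u" using lle_total[of u v] lenA lu by simp
          then show "v \<in> C2 \<union> Qs" using v by (auto simp: C2_def Qs_def)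
        qed
      qed
      moreover have "C2 \<inter> Qs = {u}" using uu1 by (auto simp: C2_def Qs_def uA lle_refl intro: lle_antisym)
      ultimately show ?thesis using card_Un_Int[of C2 Qs] finite_A[of d m]
        unfolding Q1 C2_def Qs_def by simp
    qed
    have "Q d j (Suc m) = (\<Sum>b\<le>d 1. if b = d 1 then card C2 else 0)"
      unfolding QS
    proof (rule sum.cong)
      fix b assume "b \<in> {..d 1}"
      then show "card {v. b # v \<in> S} = (if b = d 1 then card C2 else 0)"
        unfolding fb C2_def using True by auto
    qed simp
    also have "\<dots> = card C2" by simp
    finally show ?thesis using c2 HR' QsQ True e_def by simp
  next
    case False
    then have ed: "e < d 1" using e by simp
    have "int (Q d j (Suc m)) = (\<Sum>b\<le>d 1. (if b = e then int (card C1) else 0) + (if e < b \<and> b < d 1 then int (HH d m) else 0) + (if b = d 1 then int (Q d 1 m) else 0))"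
      unfolding QS of_nat_sum
    proof (rule sum.cong)
      fix b assume b: "b \<in> {..d 1}"
      show "int (card {v. b # v \<in> S}) = (if b = e then int (card C1) else 0) + (if e < b \<and> b < d 1 then int (HH d m) else 0) + (if b = d 1 then int (Q d 1 m) else 0)"
      proof -
        consider "b < e" | "b = e" | "e < b \<and> b < d 1" | "b = d 1" using b ed by fastforce
        then show ?thesis
        proof cases
          case 1 then show ?thesis unfolding fb using ed by auto
        next
          case 2 then show ?thesis unfolding fb C1_def using ed by auto
        next
          case 3 then show ?thesis unfolding fb HH_def by auto
        next
          case 4 then show ?thesis unfolding fb Q1 using ed by auto
        qed
      qed
    qed simp
    also have "\<dots> = int (card C1) + (\<Sum>b\<le>d 1. if e < b \<and> b < d 1 then int (HH d m) else 0) + int (Q d 1 m)"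
      using ed e by (simp add: sum.distrib)
    also have "(\<Sum>b\<le>d 1. if e < b \<and> b < d 1 then int (HH d m) else 0) = (\<Sum>b\<in>{Suc e..<d 1}. int (HH d m))"
      by (rule sum.mono_neutral_cong_right) auto
    also have "\<dots> = (int (d 1) - int e - 1) * int (HH d m)" using ed by simp
    finally show ?thesis using c1 HR' QsQ e_def by (simp add: algebra_simps)
  qed
qed

definition G :: "(nat \<Rightarrow> nat) \<Rightarrow> nat \<Rightarrow> nat \<Rightarrow> nat \<Rightarrow> int" where
  "G d j m i = (-1::int)^i * (int (HH d (m - i)) - int (d (Suc (j + i))) * int (HH d (m - Suc i)) + 1)"

lemma Cform:
  assumes alph: "\<forall>i\<ge>1. d i \<le> d 1" and lyn: "alt_lyndon d"
  shows "int (Q d j m) = (\<Sum>i<m. G d j m i) + (-1)^m"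
proof (induction m arbitrary: j)
  case 0 then show ?case by (simp add: Qbase)
next
  case (Suc m)
  have "(\<Sum>i<Suc m. G d j (Suc m) i) = G d j (Suc m) 0 + (\<Sum>i<m. G d j (Suc m) (Suc i))"
    by (rule sum.lessThan_Suc_shift)
  also have "(\<Sum>i<m. G d j (Suc m) (Suc i)) = - (\<Sum>i<m. G d (Suc j) m i)"
    by (simp add: sum_negf[symmetric] G_def)
  finally have "(\<Sum>i<Suc m. G d j (Suc m) i) = G d j (Suc m) 0 - (\<Sum>i<m. G d (Suc j) m i)" by simp
  moreover have "G d j (Suc m) 0 = int (HH d (Suc m)) - int (d (Suc j)) * int (HH d m) + 1"
    by (simp add: G_def)
  ultimately show ?case using QR[OF alph lyn, of j m] Suc.IH[of "Suc j"] by simp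
qed


theorem proposition1:
  fixes d :: "nat \<Rightarrow> nat"
  assumes alph: "\<forall>i\<ge>1. d i \<le> d 1"
    and lyn: "alt_lyndon d"
  defines "M \<equiv> alt_lyndon_system (d 1) d"
    and "d0 \<equiv> (\<lambda>k. if k = 0 then 0 else d k)"
  shows "H M 0 = 1 \<and>
    (\<forall>n\<ge>1. int (H M n) =
       (\<Sum>k=1..n. (-1) ^ k * (int (d0 (k - 1)) - int (d0 k)) * int (H M (n - k))) + 1)"
proof -
  have LA: "\<And>n. {w \<in> language M. length w = n} = A d n"
    using lang_adm adm_lang[OF alph lyn] unfolding M_def A_def by blast
  have HM: "\<And>n. H M n = HH d n" unfolding H_def HH_def LA ..
  have H0: "H M 0 = 1" by (simp add: HM HH_def A0)
  show ?thesis
  proof (intro conjI allI impI H0)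
    fix n :: nat assume "n \<ge> 1"
    then obtain m where n: "n = Suc m" by (cases n) auto
    define f where "f k = (-1::int) ^ k * (int (d0 (k - 1)) - int (d0 k)) * int (H M (n - k))" for k
    have "(\<Sum>k=1..n. f k) = (\<Sum>i<Suc m. f (Suc i))"
      unfolding n by (simp add: sum.atLeast1_atMost_eq)
    also have "\<dots> = f 1 + (\<Sum>i<m. f (Suc (Suc i)))"
      using sum.lessThan_Suc_shift[of "\<lambda>i. f (Suc i)" m] by simp
    also have "f 1 = int (d 1) * int (HH d m)" by (simp add: f_def d0_def HM n)
    also have "(\<Sum>i<m. f (Suc (Suc i))) = (\<Sum>i<m. G d 1 m i - G d 0 m i)"
      by (rule sum.cong) (simp_all add: f_def d0_def HM n G_def algebra_simps)
    also have "\<dots> = int (Q d 1 m) - int (Q d 0 m)"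
      using Cform[OF alph lyn, of 1 m] Cform[OF alph lyn, of 0 m] by (simp add: sum_subtractf)
    finally have "(\<Sum>k=1..n. f k) = int (d 1) * int (HH d m) + int (Q d 1 m) - 1"
      using Q0[OF alph lyn, of m] by simp
    then show "int (H M n) = (\<Sum>k=1..n. f k) + 1"
      using HR[of d m] by (simp add: HM n)
  qed
qed

end
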